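(* Let $c$ be a closure operator on $\mathcal A$. If $c$ is idempotent, i.e. $c_A(c_A(m))=c_A(m)$ for all $A\in\mathcal A$ and $m\in\operatorname{sub}_{\mathcal A}A$, then $c^\rho$ is idempotent, i.e. $c^\rho_X(c^\rho_X(m))=c^\rho_X(m)$ for all $X\in\mathcal X$ and $m\in\operatorname{sub}X$.
   Context: Standing setting. $\mathcal X$ and $\mathcal A$ are finitely complete categories; $\mathcal X$ carries a proper factorization system $(\mathcal E,\mathcal M)$ and $\mathcal A$ a proper factorization system $(\mathcal F,\mathcal N)$ (proper: every member of $\mathcal E$, resp. $\mathcal F$, is an epimorphism and every member of $\mathcal M$, resp. $\mathcal N$, is a monomorphism). $\mathcal A$ is a full reflective subcategory of $\mathcal X$ with reflector $R:\mathcal X\to\mathcal A$ and reflection (unit) $\rho_X:X\to RX$; as in the paper's setting, $\mathcal N\subseteq\mathcal M$ and $R\mathcal E\subseteq\mathcal F$. For $X\in\mathcal X$, $\operatorname{sub}X$ is the class $\mathcal M/X$ of $\mathcal M$-morphisms with codomain $X$, preordered by $m\le n$ iff $m=nj$ for some morphism $j$; for $A\in\mathcal A$, $\operatorname{sub}_{\mathcal A}A=\mathcal N/A$ with the same preorder. For $f:X\to Y$ and $m\in\operatorname{sub}X$, the image $f(m)\in\operatorname{sub}Y$ is the $\mathcal M$-part of the $(\mathcal E,\mathcal M)$-factorization of $fm$, and for $n\in\operatorname{sub}Y$ the preimage $f^{-1}(n)\in\operatorname{sub}X$ is the pullback of $n$ along $f$ (analogously in $\mathcal A$ using $(\mathcal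 F,\mathcal N)$). A closure operator $c$ on $\mathcal A$ (with respect to $\mathcal N$) is a family of maps $c_A:\operatorname{sub}_{\mathcal A}A\to\operatorname{sub}_{\mathcal A}A$ ($A\in\mathcal A$) such that $m\le c_A(m)$, $m\le n\Rightarrow c_A(m)\le c_A(n)$, and $f(c_A(m))\le c_B(f(m))$ for every morphism $f:A\to B$ of $\mathcal A$; closure operators on $\mathcal X$ (with respect to $\mathcal M$) are defined likewise. For an arbitrary morphism $g:M\to A$ of $\mathcal A$, write $g(1_M)$ for the $\mathcal N$-part of its $(\mathcal F,\mathcal N)$-factorization and put $c_A(g):=c_A(g(1_M))$. The $R$-initial lift of $c$ is the closure operator $c^\rho$ on $\mathcal X$ given by $c^\rho_X(m)=\rho_X^{-1}(c_{RX}(Rm))$ for $X\in\mathcal X$, $m\in\operatorname{sub}X$. *)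

theory Defs
  imports Main
begin

record ('o, 'a) cat =
  ob  :: "'o set"
  ar  :: "'a set"
  dm  :: "'a \<Rightarrow> 'o"
  cd  :: "'a \<Rightarrow> 'o"
  idm :: "'o \<Rightarrow> 'a"
  cmp :: "'a \<Rightarrow> 'a \<Rightarrow> 'a"   (* cmp C g f = g o f *)

definition hom :: "('o, 'a) cat \<Rightarrow> 'o \<Rightarrow> 'o \<Rightarrow> 'a set" where
  "hom C x y = {f \<in> ar C. dm C f = x \<and> cd C f = y}"

definition category :: "('o, 'a) cat \<Rightarrow> bool" where
  "category C \<longleftrightarrow>
     (\<forall>f\<in>ar C. dm C f \<in> ob C \<and> cd C f \<in> ob C) \<and>
     (\<forall>x\<in>ob C. idm C x \<in> hom C x x) \<and>
     (\<forall>f\<in>ar C. \<forall>g\<in>ar C. cd C f = dm C g \<longrightarrow> cmp C g f \<in> hom C (dm C f) (cd C g)) \<and>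
     (\<forall>f\<in>ar C. cmp C f (idm C (dm C f)) = f \<and> cmp C (idm C (cd C f)) f = f) \<and>
     (\<forall>f\<in>ar C. \<forall>g\<in>ar C. \<forall>h\<in>ar C. cd C f = dm C g \<and> cd C g = dm C h \<longrightarrow>
        cmp C h (cmp C g f) = cmp C (cmp C h g) f)"

definition iso :: "('o, 'a) cat \<Rightarrow> 'a \<Rightarrow> bool" where
  "iso C f \<longleftrightarrow> f \<in> ar C \<and> (\<exists>g\<in>hom C (cd C f) (dm C f).
      cmp C g f = idm C (dm C f) \<and> cmp C f g = idm C (cd C f))"

definition mono :: "('o, 'a) cat \<Rightarrow> 'a \<Rightarrow> bool" where
  "mono C f \<longleftrightarrow> f \<in> ar C \<and> (\<forall>g\<in>ar C. \<forall>h\<in>ar C.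
      cd C g = dm C f \<and> cd C h = dm C f \<and> dm C g = dm C h \<and> cmp C f g = cmp C f h \<longrightarrow> g = h)"

definition epi :: "('o, 'a) cat \<Rightarrow> 'a \<Rightarrow> bool" where
  "epi C f \<longleftrightarrow> f \<in> ar C \<and> (\<forall>g\<in>ar C. \<forall>h\<in>ar C.
      dm C g = cd C f \<and> dm C h = cd C f \<and> cd C g = cd C h \<and> cmp C g f = cmp C h f \<longrightarrow> g = h)"

definition is_pullback :: "('o, 'a) cat \<Rightarrow> 'a \<Rightarrow> 'a \<Rightarrow> 'a \<Rightarrow> 'a \<Rightarrow> bool" where
  "is_pullback C f n p q \<longleftrightarrow>
     f \<in> ar C \<and> n \<in> ar C \<and> cd C f = cd C n \<and>
     p \<in> hom C (dm C p) (dm C f) \<and> q \<in> hom C (dm C p) (dm C n) \<and>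
     cmp C f p = cmp C n q \<and>
     (\<forall>p'\<in>ar C. \<forall>q'\<in>ar C. dm C p' = dm C q' \<and> cd C p' = dm C f \<and> cd C q' = dm C n \<and>
        cmp C f p' = cmp C n q' \<longrightarrow>
        (\<exists>!u. u \<in> hom C (dm C p') (dm C p) \<and> cmp C p u = p' \<and> cmp C q u = q'))"

definition terminal :: "('o, 'a) cat \<Rightarrow> 'o \<Rightarrow> bool" where
  "terminal C t \<longleftrightarrow> t \<in> ob C \<and> (\<forall>x\<in>ob C. \<exists>!f. f \<in> hom C x t)"

definition finitely_complete :: "('o, 'a) cat \<Rightarrow> bool" where
  "finitely_complete C \<longleftrightarrow> (\<exists>t. terminal C t) \<and>
     (\<forall>f\<in>ar C. \<forall>n\<in>ar C. cd C f = cd C n \<longrightarrow> (\<exists>p q. is_pullback C f n p q))"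

definition factorization_system :: "('o, 'a) cat \<Rightarrow> 'a set \<Rightarrow> 'a set \<Rightarrow> bool" where
  "factorization_system C E M \<longleftrightarrow>
     E \<subseteq> ar C \<and> M \<subseteq> ar C \<and>
     (\<forall>e\<in>E. \<forall>i. iso C i \<and> cd C e = dm C i \<longrightarrow> cmp C i e \<in> E) \<and>
     (\<forall>e\<in>E. \<forall>i. iso C i \<and> cd C i = dm C e \<longrightarrow> cmp C e i \<in> E) \<and>
     (\<forall>m\<in>M. \<forall>i. iso C i \<and> cd C m = dm C i \<longrightarrow> cmp C i m \<in> M) \<and>
     (\<forall>m\<in>M. \<forall>i. iso C i \<and> cd C i = dm C m \<longrightarrow> cmp C m i \<in> M) \<and>
     (\<forall>f\<in>ar C. \<exists>e\<in>E. \<exists>m\<in>M. cd C e = dm C m \<and> f = cmp C m e) \<and>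
     (\<forall>e\<in>E. \<forall>m\<in>M. \<forall>u\<in>ar C. \<forall>v\<in>ar C.
        dm C u = dm C e \<and> cd C u = dm C m \<and> dm C v = cd C e \<and> cd C v = cd C m \<and>
        cmp C v e = cmp C m u \<longrightarrow>
        (\<exists>!d. d \<in> hom C (cd C e) (dm C m) \<and> cmp C d e = u \<and> cmp C m d = v))"

definition proper_fs :: "('o, 'a) cat \<Rightarrow> 'a set \<Rightarrow> 'a set \<Rightarrow> bool" where
  "proper_fs C E M \<longleftrightarrow> factorization_system C E M \<and> (\<forall>e\<in>E. epi C e) \<and> (\<forall>m\<in>M. mono C m)"

definition fullsub :: "('o, 'a) cat \<Rightarrow> 'o set \<Rightarrow> ('o, 'a) cat" where
  "fullsub C S = C\<lparr>ob := S, ar := {f \<in> ar C. dm C f \<in> S \<and> cd C f \<in> S}\<rparr>"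

definition reflection :: "('o, 'a) cat \<Rightarrow> 'o set \<Rightarrow> ('o \<Rightarrow> 'o) \<Rightarrow> ('o \<Rightarrow> 'a) \<Rightarrow> bool" where
  "reflection C S RO rho \<longleftrightarrow> S \<subseteq> ob C \<and>
     (\<forall>X\<in>ob C. RO X \<in> S \<and> rho X \<in> hom C X (RO X) \<and>
        (\<forall>A\<in>S. \<forall>f\<in>hom C X A. \<exists>!g. g \<in> hom C (RO X) A \<and> cmp C g (rho X) = f))"

definition reflA :: "('o, 'a) cat \<Rightarrow> ('o \<Rightarrow> 'o) \<Rightarrow> ('o \<Rightarrow> 'a) \<Rightarrow> 'a \<Rightarrow> 'a" where
  "reflA C RO rho f = (THE g. g \<in> hom C (RO (dm C f)) (RO (cd C f)) \<and>
      cmp C g (rho (dm C f)) = cmp C (rho (cd C f)) f)"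

definition sub :: "('o, 'a) cat \<Rightarrow> 'a set \<Rightarrow> 'o \<Rightarrow> 'a set" where
  "sub C M X = {m \<in> M. cd C m = X}"

definition sle :: "('o, 'a) cat \<Rightarrow> 'a \<Rightarrow> 'a \<Rightarrow> bool" where
  "sle C m n \<longleftrightarrow> (\<exists>j \<in> hom C (dm C m) (dm C n). m = cmp C n j)"

text \<open>Equality in the preordered class sub X (i.e. isomorphic subobjects).\<close>
definition seq :: "('o, 'a) cat \<Rightarrow> 'a \<Rightarrow> 'a \<Rightarrow> bool" where
  "seq C m n \<longleftrightarrow> sle C m n \<and> sle C n m"

text \<open>M-part of a (chosen) (E,M)-factorization; g(1_M) in the paper's notation.\<close>
definition mpart :: "('o, 'a) cat \<Rightarrow> 'a set \<Rightarrow> 'a set \<Rightarrow> 'a \<Rightarrow> 'a" where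
  "mpart C E M f = (SOME m. m \<in> M \<and> (\<exists>e\<in>E. cd C e = dm C m \<and> f = cmp C m e))"

definition image :: "('o, 'a) cat \<Rightarrow> 'a set \<Rightarrow> 'a set \<Rightarrow> 'a \<Rightarrow> 'a \<Rightarrow> 'a" where
  "image C E M f m = mpart C E M (cmp C f m)"

definition preimage :: "('o, 'a) cat \<Rightarrow> 'a \<Rightarrow> 'a \<Rightarrow> 'a" where
  "preimage C f n = (SOME p. \<exists>q. is_pullback C f n p q)"

definition closure_op :: "('o, 'a) cat \<Rightarrow> 'a set \<Rightarrow> 'a set \<Rightarrow> ('o \<Rightarrow> 'a \<Rightarrow> 'a) \<Rightarrow> bool" where
  "closure_op C E M c \<longleftrightarrow>
     (\<forall>X\<in>ob C. \<forall>m\<in>sub C M X. c X m \<in> sub C M X \<and> sle C m (c X m)) \<and>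
     (\<forall>X\<in>ob C. \<forall>m\<in>sub C M X. \<forall>n\<in>sub C M X. sle C m n \<longrightarrow> sle C (c X m) (c X n)) \<and>
     (\<forall>f\<in>ar C. \<forall>m\<in>sub C M (dm C f).
        sle C (image C E M f (c (dm C f) m)) (c (cd C f) (image C E M f m)))"

definition idempotent_co :: "('o, 'a) cat \<Rightarrow> 'a set \<Rightarrow> ('o \<Rightarrow> 'a \<Rightarrow> 'a) \<Rightarrow> bool" where
  "idempotent_co C M c \<longleftrightarrow> (\<forall>X\<in>ob C. \<forall>m\<in>sub C M X. seq C (c X (c X m)) (c X m))"

text \<open>The R-initial lift: c^rho_X(m) = rho_X^{-1}(c_{RX}(Rm)), where c_A(g) := c_A(g(1_M)).\<close>
definition initial_lift :: "('o, 'a) cat \<Rightarrow> 'o set \<Rightarrow> 'a set \<Rightarrow> 'a set \<Rightarrow>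
    ('o \<Rightarrow> 'o) \<Rightarrow> ('o \<Rightarrow> 'a) \<Rightarrow> ('o \<Rightarrow> 'a \<Rightarrow> 'a) \<Rightarrow> 'o \<Rightarrow> 'a \<Rightarrow> 'a" where
  "initial_lift C S F N RO rho c X m =
     preimage C (rho X) (c (RO X) (mpart (fullsub C S) F N (reflA C RO rho m)))"

end

theory Submission
  imports Defs
begin


lemma cat_comp:
  assumes "category C" "f \<in> ar C" "g \<in> ar C" "cd C f = dm C g"
  shows "cmp C g f \<in> ar C" "dm C (cmp C g f) = dm C f" "cd C (cmp C g f) = cd C g"
  using assms unfolding category_def hom_def by auto

lemma cat_assoc:
  assumes "category C" "f \<in> ar C" "g \<in> ar C" "h \<in> ar C" "cd C f = dm C g" "cd C g = dm C h"
  shows "cmp C h (cmp C g f) = cmp C (cmp C h g) f"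
  using assms unfolding category_def by blast

lemma cat_ob:
  assumes "category C" "f \<in> ar C"
  shows "dm C f \<in> ob C" "cd C f \<in> ob C"
  using assms unfolding category_def by auto

lemma fullsub_simps[simp]:
  "ob (fullsub C S) = S" "ar (fullsub C S) = {f \<in> ar C. dm C f \<in> S \<and> cd C f \<in> S}"
  "dm (fullsub C S) = dm C" "cd (fullsub C S) = cd C" "cmp (fullsub C S) = cmp C"
  by (simp_all add: fullsub_def)

lemma hom_fullsub: "hom (fullsub C S) x y = {f \<in> hom C x y. x \<in> S \<and> y \<in> S}"
  by (auto simp: hom_def)

lemma sle_fullsub: "sle (fullsub C S) m n \<Longrightarrow> sle C m n"
  by (auto simp: sle_def hom_fullsub)

lemma sle_trans:
  assumes "category C" "sle C m n" "sle C n p" "n \<in> ar C" "p \<in> ar C"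
  shows "sle C m p"
proof -
  obtain j where j: "j \<in> hom C (dm C m) (dm C n)" "m = cmp C n j" using assms(2) by (auto simp: sle_def)
  obtain i where i: "i \<in> hom C (dm C n) (dm C p)" "n = cmp C p i" using assms(3) by (auto simp: sle_def)
  have "cmp C p (cmp C i j) = cmp C (cmp C p i) j"
    using cat_assoc[OF assms(1), of j i p] i j assms by (auto simp: hom_def)
  moreover have "cmp C i j \<in> hom C (dm C m) (dm C p)"
    using cat_comp[OF assms(1), of j i] i j by (auto simp: hom_def)
  moreover have "m = cmp C p (cmp C i j)" using calculation i j by simp
  ultimately show ?thesis unfolding sle_def by blast
qed

lemma refl_all:
  assumes "reflection C S RO rho" "X \<in> ob C"
  shows "RO X \<in> S \<and> rho X \<in> hom C X (RO X) \<and>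
        (\<forall>A\<in>S. \<forall>f\<in>hom C X A. \<exists>!g. g \<in> hom C (RO X) A \<and> cmp C g (rho X) = f)"
proof -
  have "\<forall>X\<in>ob C. RO X \<in> S \<and> rho X \<in> hom C X (RO X) \<and>
        (\<forall>A\<in>S. \<forall>f\<in>hom C X A. \<exists>!g. g \<in> hom C (RO X) A \<and> cmp C g (rho X) = f)"
    using assms(1) unfolding reflection_def by (rule conjunct2)
  then show ?thesis using assms(2) by (rule bspec)
qed

lemma refl_basic:
  assumes "reflection C S RO rho" "X \<in> ob C"
  shows "RO X \<in> S" "rho X \<in> hom C X (RO X)"
proof -
  note h = refl_all[OF assms]
  from h show "RO X \<in> S" by (elim conjE)
  from h show "rho X \<in> hom C X (RO X)" by (elim conjE)
qed

lemma refl_ex1: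
  assumes "reflection C S RO rho" "X \<in> ob C" "A \<in> S" "f \<in> hom C X A"
  shows "\<exists>!g. g \<in> hom C (RO X) A \<and> cmp C g (rho X) = f"
proof -
  have "\<forall>A\<in>S. \<forall>f\<in>hom C X A. \<exists>!g. g \<in> hom C (RO X) A \<and> cmp C g (rho X) = f"
    using refl_all[OF assms(1,2)] by (elim conjE)
  then have "\<forall>f\<in>hom C X A. \<exists>!g. g \<in> hom C (RO X) A \<and> cmp C g (rho X) = f"
    using assms(3) by (rule bspec)
  then show ?thesis using assms(4) by (rule bspec)
qed

lemma refl_ex:
  assumes "reflection C S RO rho" "X \<in> ob C" "A \<in> S" "f \<in> hom C X A"
  shows "\<exists>g. g \<in> hom C (RO X) A \<and> cmp C g (rho X) = f"
  using refl_ex1[OF assms] by (rule ex1_implies_ex)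


lemma reflA_prop:
  assumes "category C" "reflection C S RO rho" "k \<in> ar C"
  shows "reflA C RO rho k \<in> hom C (RO (dm C k)) (RO (cd C k))
     \<and> cmp C (reflA C RO rho k) (rho (dm C k)) = cmp C (rho (cd C k)) k"
proof -
  have ob: "dm C k \<in> ob C" "cd C k \<in> ob C" by (rule cat_ob[OF assms(1,3)])+
  have r: "rho (cd C k) \<in> hom C (cd C k) (RO (cd C k))" "RO (cd C k) \<in> S"
    using refl_basic[OF assms(2) ob(2)] by auto
  have f: "cmp C (rho (cd C k)) k \<in> hom C (dm C k) (RO (cd C k))"
    using cat_comp[OF assms(1) assms(3), of "rho (cd C k)"] r by (auto simp: hom_def)
  have "\<exists>!g. g \<in> hom C (RO (dm C k)) (RO (cd C k)) \<and> cmp C g (rho (dm C k)) = cmp C (rho (cd C k)) k"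
    by (rule refl_ex1[OF assms(2) ob(1) r(2) f])
  then show ?thesis unfolding reflA_def
    by (rule theI'[where P="\<lambda>g. g \<in> hom C (RO (dm C k)) (RO (cd C k)) \<and> cmp C g (rho (dm C k)) = cmp C (rho (cd C k)) k"])
qed

lemma ex1_eq: "\<exists>!x. P x \<Longrightarrow> P a \<Longrightarrow> P b \<Longrightarrow> a = b"
  by blast

lemma refl_unique:
  assumes "category C" "reflection C S RO rho" "X \<in> ob C" "A \<in> S"
    "g1 \<in> hom C (RO X) A" "g2 \<in> hom C (RO X) A" "cmp C g1 (rho X) = cmp C g2 (rho X)"
  shows "g1 = g2"
proof -
  have r: "rho X \<in> hom C X (RO X)" by (rule refl_basic(2)[OF assms(2,3)])
  have ra: "rho X \<in> ar C" "cd C (rho X) = RO X" "dm C (rho X) = X" using r by (simp_all add: hom_def)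
  have g1: "g1 \<in> ar C" "dm C g1 = RO X" "cd C g1 = A" using assms(5) by (simp_all add: hom_def)
  have "cmp C g1 (rho X) \<in> ar C" "dm C (cmp C g1 (rho X)) = X" "cd C (cmp C g1 (rho X)) = A"
    using cat_comp[OF assms(1) ra(1) g1(1)] ra g1 by simp_all
  then have f: "cmp C g1 (rho X) \<in> hom C X A" by (simp add: hom_def)
  have u: "\<exists>!g. g \<in> hom C (RO X) A \<and> cmp C g (rho X) = cmp C g1 (rho X)"
    by (rule refl_ex1[OF assms(2,3,4) f])
  show ?thesis
    by (rule ex1_eq[OF u]) (use assms(5,6,7) in simp_all)
qed

lemma mpart_prop:
  assumes "factorization_system A F N" "f \<in> ar A"
  shows "mpart A F N f \<in> N \<and> (\<exists>e\<in>F. cd A e = dm A (mpart A F N f) \<and> f = cmp A (mpart A F N f) e)"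
proof -
  have "\<forall>f\<in>ar A. \<exists>e\<in>F. \<exists>m\<in>N. cd A e = dm A m \<and> f = cmp A m e"
    using assms(1) unfolding factorization_system_def by (elim conjE)
  then have "\<exists>e\<in>F. \<exists>m\<in>N. cd A e = dm A m \<and> f = cmp A m e" using assms(2) by (rule bspec)
  then have "\<exists>m. m \<in> N \<and> (\<exists>e\<in>F. cd A e = dm A m \<and> f = cmp A m e)" by blast
  then show ?thesis unfolding mpart_def by (rule someI_ex)
qed

lemma preimage_prop:
  assumes "finitely_complete C" "f \<in> ar C" "n \<in> ar C" "cd C f = cd C n"
  shows "\<exists>q. is_pullback C f n (preimage C f n) q"
proof -
  have "\<forall>f\<in>ar C. \<forall>n\<in>ar C. cd C f = cd C n \<longrightarrow> (\<exists>p q. is_pullback C f n p q)"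
    using assms(1) unfolding finitely_complete_def by (elim conjE)
  then have "\<exists>p q. is_pullback C f n p q" using assms(2,3,4) by blast
  then show ?thesis unfolding preimage_def by (rule someI_ex)
qed

lemma pb_parts:
  assumes "is_pullback C f n p q"
  shows "f \<in> ar C" "n \<in> ar C" "cd C f = cd C n" "p \<in> hom C (dm C p) (dm C f)"
    "q \<in> hom C (dm C p) (dm C n)" "cmp C f p = cmp C n q"
  using assms unfolding is_pullback_def by simp_all

lemma pb_parts7:
  assumes "is_pullback C f n p q"
  shows "\<forall>p'\<in>ar C. \<forall>q'\<in>ar C. dm C p' = dm C q' \<and> cd C p' = dm C f \<and> cd C q' = dm C n \<and>
        cmp C f p' = cmp C n q' \<longrightarrow>
        (\<exists>!u. u \<in> hom C (dm C p') (dm C p) \<and> cmp C p u = p' \<and> cmp C q u = q')"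
  using assms unfolding is_pullback_def by (elim conjE)

lemma pb_basic:
  assumes "is_pullback C f n p q"
  shows "p \<in> ar C" "cd C p = dm C f" "q \<in> ar C" "dm C q = dm C p" "cd C q = dm C n"
    "cmp C f p = cmp C n q" "f \<in> ar C" "n \<in> ar C" "cd C f = cd C n"
  using pb_parts[OF assms] unfolding hom_def by auto

lemma pb_univ:
  assumes "is_pullback C f n p q" "p' \<in> ar C" "q' \<in> ar C" "dm C p' = dm C q'"
    "cd C p' = dm C f" "cd C q' = dm C n" "cmp C f p' = cmp C n q'"
  shows "\<exists>u. u \<in> hom C (dm C p') (dm C p) \<and> cmp C p u = p'"
proof -
  have "\<exists>!u. u \<in> hom C (dm C p') (dm C p) \<and> cmp C p u = p' \<and> cmp C q u = q'"
    using pb_parts7[OF assms(1)] assms(2-7) by blast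
  then show ?thesis by blast
qed



theorem proposition2p3:
  fixes C :: "('o, 'a) cat" and S :: "'o set"
    and E M F N :: "'a set"
    and RO :: "'o \<Rightarrow> 'o" and rho :: "'o \<Rightarrow> 'a"
    and c :: "'o \<Rightarrow> 'a \<Rightarrow> 'a"
  assumes "category C" and "finitely_complete C" and "proper_fs C E M"
    and "finitely_complete (fullsub C S)" and "proper_fs (fullsub C S) F N"
    and "reflection C S RO rho"
    and "N \<subseteq> M" and "\<forall>e\<in>E. reflA C RO rho e \<in> F"
    and "closure_op (fullsub C S) F N c"
    and "idempotent_co (fullsub C S) N c"
  shows "idempotent_co C M (initial_lift C S F N RO rho c)"
proof -
  let ?A = "fullsub C S"
  have cat: "category C" by fact
  have fsA: "factorization_system ?A F N" using assms(5) unfolding proper_fs_def by (elim conjE)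
  have NA1: "N \<subseteq> ar ?A" using fsA unfolding factorization_system_def by (elim conjE)
  have NA2: "F \<subseteq> ar ?A" using fsA unfolding factorization_system_def by (elim conjE)
  note NA = NA1 NA2
  have fsC: "factorization_system C E M" using assms(3) unfolding proper_fs_def by (elim conjE)
  have MC: "M \<subseteq> ar C" using fsC unfolding factorization_system_def by (elim conjE)
  have ext: "\<And>Y n. Y \<in> S \<Longrightarrow> n \<in> sub ?A N Y \<Longrightarrow> c Y n \<in> sub ?A N Y \<and> sle ?A n (c Y n)"
    using assms(9) unfolding closure_op_def by simp
  have monot: "\<And>Y n n'. Y \<in> S \<Longrightarrow> n \<in> sub ?A N Y \<Longrightarrow> n' \<in> sub ?A N Y \<Longrightarrow> sle ?A n n' \<Longrightarrow> sle ?A (c Y n) (c Y n')"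
    using assms(9) unfolding closure_op_def by simp
  have idem: "\<And>Y n. Y \<in> S \<Longrightarrow> n \<in> sub ?A N Y \<Longrightarrow> sle ?A (c Y (c Y n)) (c Y n)"
    using assms(10) unfolding idempotent_co_def seq_def by simp
  show ?thesis unfolding idempotent_co_def
  proof (intro ballI)
    fix X m assume X: "X \<in> ob C" and m: "m \<in> sub C M X"
    define L where "L = initial_lift C S F N RO rho c X"
    define n0 where "n0 = (\<lambda>k. mpart ?A F N (reflA C RO rho k))"
    have RX: "RO X \<in> S" "rho X \<in> hom C X (RO X)" using refl_basic[OF assms(6) X] by auto
    have rX: "rho X \<in> ar C" "cd C (rho X) = RO X" "dm C (rho X) = X" using RX(2) by (auto simp: hom_def)
    have n0sub: "n0 k \<in> sub ?A N (RO X)" if k: "k \<in> ar C" "cd C k = X" for k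
    proof -
      have Rk: "reflA C RO rho k \<in> hom C (RO (dm C k)) (RO X)"
        using reflA_prop[OF cat assms(6) k(1)] k(2) by simp
      have "RO (dm C k) \<in> S" using refl_basic(1)[OF assms(6) cat_ob(1)[OF cat k(1)]] .
      then have "reflA C RO rho k \<in> ar ?A" using Rk RX by (simp add: hom_def)
      from mpart_prop[OF fsA this] obtain e where
        e: "n0 k \<in> N" "e \<in> F" "cd C e = dm C (n0 k)" "reflA C RO rho k = cmp C (n0 k) e"
        unfolding n0_def by auto
      have ea: "e \<in> ar C" "n0 k \<in> ar C" using e NA by auto
      have "cd C (n0 k) = RO X"
        using cat_comp(3)[OF cat ea e(3)] e(4) Rk by (auto simp: hom_def)
      then show ?thesis using e by (simp add: sub_def)
    qed
    have Lpb: "\<exists>q. is_pullback C (rho X) (c (RO X) (n0 k)) (L k) q" and Leq: "L k = preimage C (rho X) (c (RO X) (n0 k))"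
      if k: "k \<in> ar C" "cd C k = X" for k
    proof -
      show Leq: "L k = preimage C (rho X) (c (RO X) (n0 k))"
        unfolding L_def initial_lift_def n0_def by simp
      have "c (RO X) (n0 k) \<in> sub ?A N (RO X)" using ext[OF RX(1) n0sub[OF k]] by blast
      then have c1: "c (RO X) (n0 k) \<in> ar C" and c2: "cd C (c (RO X) (n0 k)) = RO X"
        using NA by (auto simp: sub_def)
      show "\<exists>q. is_pullback C (rho X) (c (RO X) (n0 k)) (L k) q"
        unfolding Leq by (rule preimage_prop[OF assms(2) rX(1) c1]) (simp add: rX c2)
    qed
    have Lar: "L k \<in> ar C \<and> cd C (L k) = X" if k: "k \<in> ar C" "cd C k = X" for k
    proof -
      obtain q where "is_pullback C (rho X) (c (RO X) (n0 k)) (L k) q" using Lpb[OF k] by blast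
      from pb_basic(1,2)[OF this] show ?thesis using rX by simp
    qed
    have m': "m \<in> ar C" "cd C m = X" using m MC by (auto simp: sub_def)
    define k where "k = L m"
    have k: "k \<in> ar C" "cd C k = X" using Lar[OF m'] k_def by auto
    define n where "n = c (RO X) (n0 m)"
    define n' where "n' = n0 k"
    define k' where "k' = L k"
    have k': "k' \<in> ar C" "cd C k' = X" using Lar[OF k] k'_def by auto
    have nsub: "n \<in> sub ?A N (RO X)" using ext[OF RX(1) n0sub[OF m']] n_def by blast
    have n'sub: "n' \<in> sub ?A N (RO X)" using n0sub[OF k] n'_def by blast
    have cn'sub: "c (RO X) n' \<in> sub ?A N (RO X)" using ext[OF RX(1) n'sub] by blast
    obtain q where q: "is_pullback C (rho X) n k q"
      using Lpb[OF m'] k_def n_def by metis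
    obtain q2 where q2: "is_pullback C (rho X) (c (RO X) n') k' q2"
      using Lpb[OF k] k'_def n'_def by metis
    note pq = pb_basic[OF q]
    note pq2 = pb_basic[OF q2]
    define P where "P = dm C k"
    have Pob: "P \<in> ob C" using cat_ob[OF cat k(1)] P_def by simp
    have rP: "rho P \<in> ar C" "dm C (rho P) = P" "cd C (rho P) = RO P" "RO P \<in> S"
      using refl_basic[OF assms(6) Pob] unfolding hom_def by auto
    define Rk where "Rk = reflA C RO rho k"
    have Rk: "Rk \<in> ar C" "dm C Rk = RO P" "cd C Rk = RO X" "cmp C Rk (rho P) = cmp C (rho X) k"
      using reflA_prop[OF cat assms(6) k(1)] k(2) unfolding Rk_def P_def hom_def by auto
    have nA: "n \<in> N" "n \<in> ar C" "dm C n \<in> S" "cd C n = RO X" using nsub NA by (auto simp: sub_def)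
    have qh: "q \<in> hom C P (dm C n)" using pq P_def by (simp add: hom_def)
    obtain q' where q': "q' \<in> hom C (RO P) (dm C n)" "cmp C q' (rho P) = q"
      using refl_ex[OF assms(6) Pob nA(3) qh] by blast
    have q'a: "q' \<in> ar C" "dm C q' = RO P" "cd C q' = dm C n" using q' by (auto simp: hom_def)
    have nq'a: "cmp C n q' \<in> ar C" "dm C (cmp C n q') = RO P" "cd C (cmp C n q') = RO X"
      using cat_comp[OF cat q'a(1) nA(2)] q'a nA by auto
    have "cmp C (cmp C n q') (rho P) = cmp C n (cmp C q' (rho P))"
      using cat_assoc[OF cat rP(1) q'a(1) nA(2)] rP q'a by simp
    also have "\<dots> = cmp C (rho X) k" using q'(2) pq(6) by simp
    finally have eq1: "cmp C (cmp C n q') (rho P) = cmp C Rk (rho P)" using Rk(4) by simp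
    have RkEq: "Rk = cmp C n q'"
      by (rule refl_unique[OF cat assms(6) Pob RX(1)])
         (use Rk nq'a nA eq1 in \<open>auto simp: hom_def\<close>)
    have RkA: "Rk \<in> ar ?A" using Rk rP(4) RX(1) by simp
    have n'eq: "n' = mpart ?A F N Rk" by (simp add: n'_def n0_def Rk_def)
    obtain e where e: "n' \<in> N" "e \<in> F" "cd C e = dm C n'" "Rk = cmp C n' e"
      using mpart_prop[OF fsA RkA] unfolding n'eq[symmetric] by auto
    have n'a: "n' \<in> ar C" "cd C n' = RO X" "dm C n' \<in> S" using n'sub NA by (auto simp: sub_def)
    have ea: "e \<in> ar C" "dm C e = RO P" using e NA cat_comp(2)[OF cat, of e n'] n'a Rk by auto
    have diag: "\<forall>e\<in>F. \<forall>m\<in>N. \<forall>u\<in>ar ?A. \<forall>v\<in>ar ?A.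
        dm ?A u = dm ?A e \<and> cd ?A u = dm ?A m \<and> dm ?A v = cd ?A e \<and> cd ?A v = cd ?A m \<and>
        cmp ?A v e = cmp ?A m u \<longrightarrow>
        (\<exists>!d. d \<in> hom ?A (cd ?A e) (dm ?A m) \<and> cmp ?A d e = u \<and> cmp ?A m d = v)"
      using fsA unfolding factorization_system_def by (elim conjE)
    have q'A: "q' \<in> ar ?A" using q'a rP(4) nA by simp
    have n'A: "n' \<in> ar ?A" using e(1) NA by blast
    have cond: "dm C q' = dm C e \<and> cd C q' = dm C n \<and> dm C n' = cd C e \<and> cd C n' = cd C n \<and> cmp C n' e = cmp C n q'"
      using q'a ea e n'a nA RkEq by simp
    have "\<exists>!d. d \<in> hom ?A (cd ?A e) (dm ?A n) \<and> cmp ?A d e = q' \<and> cmp ?A n d = n'"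
      by (rule diag[rule_format, OF e(2) nA(1) q'A n'A]) (simp add: cond)
    then obtain d where d: "d \<in> hom ?A (cd C e) (dm C n)" "cmp C n d = n'" by auto
    have le1: "sle ?A n' n" unfolding sle_def using d e(3) by auto
    have le2: "sle ?A (c (RO X) n') (c (RO X) n)" using monot[OF RX(1) n'sub nsub le1] .
    have le3: "sle ?A (c (RO X) n) n" using idem[OF RX(1) n0sub[OF m']] n_def by simp
    have cna: "c (RO X) n \<in> ar C" using ext[OF RX(1) nsub] NA by (auto simp: sub_def)
    have le4: "sle C (c (RO X) n') n"
      using sle_trans[OF cat sle_fullsub[OF le2] sle_fullsub[OF le3] cna nA(2)] .
    obtain j' where j': "j' \<in> hom C (dm C (c (RO X) n')) (dm C n)" "c (RO X) n' = cmp C n j'"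
      using le4 unfolding sle_def by blast
    have j'a: "j' \<in> ar C" "dm C j' = dm C (c (RO X) n')" "cd C j' = dm C n" using j'(1) by (auto simp: hom_def)
    have jq: "cmp C j' q2 \<in> ar C" "dm C (cmp C j' q2) = dm C k'" "cd C (cmp C j' q2) = dm C n"
      using cat_comp[OF cat pq2(3) j'a(1)] pq2 j'a by auto
    have eq3: "cmp C (rho X) k' = cmp C n (cmp C j' q2)"
    proof -
      have a1: "cmp C n (cmp C j' q2) = cmp C (cmp C n j') q2"
        by (rule cat_assoc[OF cat pq2(3) j'a(1) nA(2)]) (simp_all only: pq2(5) j'a(2,3))
      show ?thesis by (simp only: pq2(6) j'(2) a1)
    qed
    have "\<exists>u. u \<in> hom C (dm C k') (dm C k) \<and> cmp C k u = k'"
      by (rule pb_univ[OF q pq2(1) jq(1)]) (simp_all only: jq(2,3) pq2(2) eq3)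
    then obtain u where u: "u \<in> hom C (dm C k') (dm C k)" "cmp C k u = k'" by blast
    have s1: "sle C k' k" unfolding sle_def by (rule bexI[of _ u]) (simp_all only: u(2) u(1) simp_thms)
    have "sle ?A n' (c (RO X) n')" using ext[OF RX(1) n'sub] by blast
    then have "sle C n' (c (RO X) n')" by (rule sle_fullsub)
    then obtain j where j: "j \<in> hom C (dm C n') (dm C (c (RO X) n'))" "n' = cmp C (c (RO X) n') j"
      unfolding sle_def by blast
    have cn'a: "c (RO X) n' \<in> ar C" using cn'sub NA by (auto simp: sub_def)
    have ja: "j \<in> ar C" "dm C j = dm C n'" "cd C j = dm C (c (RO X) n')" using j(1) by (auto simp: hom_def)
    have erP: "cmp C e (rho P) \<in> ar C" "dm C (cmp C e (rho P)) = P" "cd C (cmp C e (rho P)) = dm C n'"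
      using cat_comp[OF cat rP(1) ea(1)] rP ea e by auto
    have jer: "cmp C j (cmp C e (rho P)) \<in> ar C" "dm C (cmp C j (cmp C e (rho P))) = P"
       "cd C (cmp C j (cmp C e (rho P))) = dm C (c (RO X) n')"
      using cat_comp[OF cat erP(1) ja(1)] erP ja by auto
    have "cmp C (rho X) k = cmp C (cmp C n' e) (rho P)" using Rk(4) e(4) by simp
    also have "\<dots> = cmp C n' (cmp C e (rho P))"
      using cat_assoc[OF cat rP(1) ea(1) n'a(1)] rP ea e by simp
    also have "\<dots> = cmp C (cmp C (c (RO X) n') j) (cmp C e (rho P))"
      using j(2) by (rule arg_cong[where f="\<lambda>x. cmp C x (cmp C e (rho P))"])
    also have "\<dots> = cmp C (c (RO X) n') (cmp C j (cmp C e (rho P)))"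
      using cat_assoc[OF cat erP(1) ja(1) cn'a] erP ja by simp
    finally have eq2: "cmp C (rho X) k = cmp C (c (RO X) n') (cmp C j (cmp C e (rho P)))" .
    have "\<exists>u. u \<in> hom C (dm C k) (dm C k') \<and> cmp C k' u = k"
      by (rule pb_univ[OF q2 pq(1) jer(1)]) (simp_all only: P_def[symmetric] jer(2,3) pq(2) eq2)
    then obtain u2 where u2: "u2 \<in> hom C (dm C k) (dm C k')" "cmp C k' u2 = k" by blast
    have s2: "sle C k k'" unfolding sle_def by (rule bexI[of _ u2]) (simp_all only: u2(2) u2(1) simp_thms)
    have s3: "seq C k' k" unfolding seq_def using s1 s2 by blast
    show "seq C (L (L m)) (L m)" using s3 unfolding k'_def k_def .
  qed
qed

end
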